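(* Let $d\ge 2$ and let $g:[-1,1]\to(-\infty,\infty]$ be a function that is finite and continuous on $[-1,1)$ with $g(1)=\lim_{t\to1^-}g(t)$, differentiable on $(-1,1)$, and such that $g''$ exists, is convex on $(-1,1)$ and is strictly positive on $(-1,1)$. Let $\omega_{2d}$ be an antipodal configuration of $2d$ points on $S^{d-1}$. Then $$P^g(\omega_{2d},S^{d-1})= d\left(g\left(\tfrac1{\sqrt d}\right)+g\left(-\tfrac1{\sqrt d}\right)\right)$$ holds if and only if $\omega_{2d}$ is the set of vertices of a regular cross-polytope inscribed in $S^{d-1}$, i.e. $\omega_{2d}=\{\pm\mathbf a_1,\ldots,\pm\mathbf a_d\}$ for some orthonormal basis $\{\mathbf a_1,\ldots,\mathbf a_d\}$ of $\mathbb R^d$.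
   Context: $S^{d-1}$ is the unit sphere in $\mathbb R^d$. A configuration is a list of points (points may coincide); it is antipodal if together with $\mathbf x$ it contains $-\mathbf x$. For a configuration $\omega_N=\{\mathbf x_1,\ldots,\mathbf x_N\}\subset S^{d-1}$, $P^g(\omega_N,S^{d-1}):=\min_{\mathbf x\in S^{d-1}}\sum_{i=1}^N g(\mathbf x\cdot\mathbf x_i)$. (Under these hypotheses one always has $P^g(\omega_{2d},S^{d-1})\le d(g(1/\sqrt d)+g(-1/\sqrt d))$ for antipodal $\omega_{2d}$.) *)

theory Defs
  imports "HOL-Analysis.Analysis" "HOL-Library.Multiset" "HOL-Library.Extended_Real"
begin

definition antipodal_config :: "('a::real_normed_vector) list \<Rightarrow> bool" where
  "antipodal_config xs \<longleftrightarrow> mset (map uminus xs) = mset xs"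

definition pot_sum :: "(real \<Rightarrow> ereal) \<Rightarrow> ('a::real_inner) list \<Rightarrow> 'a \<Rightarrow> ereal" where
  "pot_sum g xs x = sum_list (map (\<lambda>y. g (x \<bullet> y)) xs)"

definition polarization :: "(real \<Rightarrow> ereal) \<Rightarrow> ('a::real_inner) list \<Rightarrow> ereal" where
  "polarization g xs = (INF x \<in> sphere 0 1. pot_sum g xs x)"

text \<open>The list xs consists of the vertices of the regular cross-polytope built on
  an orthonormal basis a_i (indexed by the coordinate type 'n, so there are d of them).\<close>
definition cross_polytope_config :: "(real ^ 'n) list \<Rightarrow> bool" where
  "cross_polytope_config xs \<longleftrightarrow>
     (\<exists>a :: 'n \<Rightarrow> real ^ 'n. (\<forall>i j. a i \<bullet> a j = (if i = j then 1 else 0)) \<and>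
        mset xs = (\<Sum>i\<in>UNIV. {#a i, - a i#}))"

end

theory Submission imports Defs begin


lemma pair_decomp:
  fixes M :: "('a::real_normed_vector) multiset"
  assumes "finite A" "image_mset uminus M = M" "0 \<notin># M" "size M = 2 * card A"
  shows "\<exists>y. M = (\<Sum>i\<in>A. {#y i, - y i#})"
  using assms
proof (induction A arbitrary: M rule: finite_induct)
  case empty
  then show ?case by simp
next
  case (insert a A)
  then have "M \<noteq> {#}" by auto
  then obtain z where z: "z \<in># M" by blast
  then have zn: "z \<noteq> 0" using insert by auto
  then have zz: "-z \<noteq> z"
  proof -
    have "z + z = 2 *\<^sub>R z" by (simp add: scaleR_2)
    moreover have "2 *\<^sub>R z \<noteq> 0" using zn by simp
    moreover have "- z = z \<Longrightarrow> z + z = 0" by (metis add.left_inverse)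
    ultimately show ?thesis by force
  qed
  have "-z \<in># image_mset uminus M" using z by simp
  then have mz: "-z \<in># M" using insert by simp
  have sub: "{#z, -z#} \<subseteq># M"
    using z mz zz by (simp add: insert_subset_eq_iff in_diff_count)
  define M' where "M' = M - {#z, -z#}"
  have "image_mset uminus M' = M'"
    unfolding M'_def using image_mset_Diff[OF sub, of uminus] insert(4) by (simp add: add_mset_commute)
  moreover have "0 \<notin># M'" unfolding M'_def using insert(5) by (meson in_diffD)
  moreover have "size M' = 2 * card A" unfolding M'_def using insert(6) insert(1,2)
    by (simp add: size_Diff_submset[OF sub])
  ultimately obtain y where y: "M' = (\<Sum>i\<in>A. {#y i, - y i#})" using insert(3) by blast
  have "M = {#z, -z#} + M'" unfolding M'_def by (rule subset_mset.add_diff_inverse[OF sub, symmetric])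
  also have "... = (\<Sum>i\<in>insert a A. {#(y(a:=z)) i, - (y(a:=z)) i#})"
    using y insert(1,2) by (simp add: sum.insert) (intro sum.cong, auto)
  finally show ?case by blast
qed

lemma pot_sum_pairs:
  fixes xs :: "('a::real_inner) list"
  assumes "mset xs = (\<Sum>i\<in>A. {#y i, - y i#})" "finite A"
  shows "pot_sum g xs x = (\<Sum>i\<in>A. g (x \<bullet> y i) + g (- (x \<bullet> y i)))"
proof -
  have "pot_sum g xs x = sum_mset (image_mset (\<lambda>y. g (x \<bullet> y)) (mset xs))"
    unfolding pot_sum_def by (metis mset_map sum_mset_sum_list)
  also have "... = (\<Sum>i\<in>A. g (x \<bullet> y i) + g (- (x \<bullet> y i)))"
    unfolding assms(1) using assms(2) by (induction A rule: finite_induct) (auto simp: add.assoc)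
  finally show ?thesis .
qed



context
  fixes gr g1 g2 :: "real \<Rightarrow> real"
  assumes d1: "\<forall>t\<in>{-1<..<1}. (gr has_real_derivative g1 t) (at t)"
    and d2: "\<forall>t\<in>{-1<..<1}. (g1 has_real_derivative g2 t) (at t)"
    and cv: "convex_on {-1<..<1} g2"
    and ps: "\<forall>t\<in>{-1<..<1}. g2 t > 0"
begin

lemma q_mono:
  assumes "0 \<le> s" "s \<le> t" "t < 1"
  shows "g2 s + g2 (-s) \<le> g2 t + g2 (-t)"
proof (cases "s = t")
  case True then show ?thesis by simp
next
  case False
  then have t0: "t > 0" using assms by auto
  define u where "u = (t - s) / (2*t)"
  have u0: "0 \<le> u" "u \<le> 1" using assms t0 unfolding u_def by (auto simp: field_simps)
  have mem: "t \<in> {-1<..<1}" "-t \<in> {-1<..<1}" using assms t0 by auto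
  have e1: "s = (1 - u) *\<^sub>R t + u *\<^sub>R (-t)" using t0 unfolding u_def by (simp add: field_simps)
  have e2: "-s = (1 - u) *\<^sub>R (-t) + u *\<^sub>R t" using t0 unfolding u_def by (simp add: field_simps)
  have "g2 s \<le> (1 - u) * g2 t + u * g2 (-t)"
    using convex_onD[OF cv u0 mem(1) mem(2)] e1 by simp
  moreover have "g2 (-s) \<le> (1 - u) * g2 (-t) + u * g2 t"
    using convex_onD[OF cv u0 mem(2) mem(1)] e2 by simp
  ultimately show ?thesis by (simp add: algebra_simps)
qed

lemma g1m_deriv:
  assumes "t \<in> {-1<..<1}"
  shows "((\<lambda>s. g1 (-s)) has_real_derivative (- g2 (-t))) (at t)"
proof -
  have "(g1 has_real_derivative g2 (-t)) (at (-t))" using d2 assms by auto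
  from DERIV_chain2[OF this DERIV_minus[OF DERIV_ident]] show ?thesis by simp
qed

lemma grm_deriv:
  assumes "t \<in> {-1<..<1}"
  shows "((\<lambda>s. gr (-s)) has_real_derivative (- g1 (-t))) (at t)"
proof -
  have "(gr has_real_derivative g1 (-t)) (at (-t))" using d1 assms by auto
  from DERIV_chain2[OF this DERIV_minus[OF DERIV_ident]] show ?thesis by simp
qed

lemma psi_deriv:
  assumes "t \<in> {-1<..<1}"
  shows "((\<lambda>s. g1 s - g1 (-s)) has_real_derivative (g2 t + g2 (-t))) (at t)"
  using DERIV_diff[OF d2[rule_format, OF assms] g1m_deriv[OF assms]] by simp

lemma h_deriv:
  assumes "t \<in> {-1<..<1}"
  shows "((\<lambda>s. gr s + gr (-s)) has_real_derivative (g1 t - g1 (-t))) (at t)"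
  using DERIV_add[OF d1[rule_format, OF assms] grm_deriv[OF assms]] by simp

lemma psi_convex: "convex_on {0..<1} (\<lambda>s. g1 s - g1 (-s))"
  by (rule convex_on_realI[where f'="\<lambda>t. g2 t + g2 (-t)"])
     (auto intro!: psi_deriv q_mono simp: is_interval_connected is_interval_ci)

lemma psi_ratio:
  assumes "0 < s" "s \<le> t" "t < 1"
  shows "(g1 s - g1 (-s)) / s \<le> (g1 t - g1 (-t)) / t"
proof -
  define u where "u = s / t"
  have u0: "0 \<le> u" "u \<le> 1" using assms unfolding u_def by auto
  have mem: "0 \<in> {0..<1::real}" "t \<in> {0..<1}" using assms by auto
  have "s = (1 - u) *\<^sub>R 0 + u *\<^sub>R t" unfolding u_def using assms by (simp add: field_simps)
  then have "g1 s - g1 (-s) \<le> (1 - u) * (g1 0 - g1 (-0)) + u * (g1 t - g1 (-t))"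
    using convex_onD[OF psi_convex u0 mem] by simp
  then have "g1 s - g1 (-s) \<le> (s / t) * (g1 t - g1 (-t))" unfolding u_def by simp
  then show ?thesis using assms by (simp add: field_simps)
qed

lemma psi_pos:
  assumes "0 < t" "t < 1"
  shows "g1 t - g1 (-t) > 0"
proof -
  have "\<exists>z>-t. z < t \<and> g1 t - g1 (-t) = (t - -t) * g2 z"
    by (rule MVT2) (use assms d2 in auto)
  then obtain z where "z > -t" "z < t" "g1 t - g1 (-t) = (t - -t) * g2 z" by blast
  moreover have "g2 z > 0" using ps \<open>z > -t\<close> \<open>z < t\<close> assms by auto
  ultimately show ?thesis using assms by simp
qed

lemma h_strict:
  assumes "0 \<le> s" "s < t" "t < 1"
  shows "gr s + gr (-s) < gr t + gr (-t)"
proof -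
  have "\<exists>z>s. z < t \<and> (gr t + gr (-t)) - (gr s + gr (-s)) = (t - s) * (g1 z - g1 (-z))"
    by (rule MVT2[where f="\<lambda>s. gr s + gr (-s)"]) (use assms in \<open>auto intro!: h_deriv\<close>)
  then obtain z where "z > s" "z < t" "(gr t + gr (-t)) - (gr s + gr (-s)) = (t - s) * (g1 z - g1 (-z))" by blast
  moreover have "g1 z - g1 (-z) > 0" using psi_pos \<open>z > s\<close> \<open>z < t\<close> assms by auto
  ultimately have "(t - s) * (g1 z - g1 (-z)) > 0" using assms by simp
  then show ?thesis using \<open>(gr t + gr (-t)) - (gr s + gr (-s)) = (t - s) * (g1 z - g1 (-z))\<close> by linarith
qed

lemma tangent:
  assumes "0 < c" "c < 1" "0 \<le> t" "t < 1"
  shows "gr t + gr (-t) - (g1 c - g1 (-c)) / (2*c) * t^2 \<ge> gr c + gr (-c) - (g1 c - g1 (-c)) / (2*c) * c^2"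
proof -
  define k where "k = (g1 c - g1 (-c)) / (2*c)"
  define phi where "phi = (\<lambda>s. gr s + gr (-s) - k * s^2)"
  have dphi: "(phi has_real_derivative (g1 s - g1 (-s) - k * (2 * s))) (at s)" if "s \<in> {-1<..<1}" for s
    unfolding phi_def
    by (rule DERIV_diff[OF h_deriv[OF that]]) (auto intro!: derivative_eq_intros)
  have key: "g1 s - g1 (-s) - k * (2 * s) = s * ((g1 s - g1 (-s))/s - (g1 c - g1 (-c))/c)" if "s > 0" for s
    using that assms unfolding k_def by (simp add: field_simps)
  consider "t < c" | "t = c" | "t > c" by linarith
  then have "phi t \<ge> phi c"
  proof cases
    case 1
    have "\<exists>z>t. z < c \<and> phi c - phi t = (c - t) * (g1 z - g1 (-z) - k * (2 * z))"
      by (rule MVT2) (use assms 1 in \<open>auto intro!: dphi\<close>)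
    then obtain z where z: "z > t" "z < c" "phi c - phi t = (c - t) * (g1 z - g1 (-z) - k * (2 * z))" by blast
    have "(g1 z - g1 (-z))/z \<le> (g1 c - g1 (-c))/c" using psi_ratio z assms by auto
    then have "g1 z - g1 (-z) - k * (2 * z) \<le> 0" using key[of z] z assms
      by (simp add: mult_nonneg_nonpos)
    then have "(c - t) * (g1 z - g1 (-z) - k * (2 * z)) \<le> 0" using z 1 by (simp add: mult_nonneg_nonpos)
    then show ?thesis using z by linarith
  next
    case 2 then show ?thesis by simp
  next
    case 3
    have "\<exists>z>c. z < t \<and> phi t - phi c = (t - c) * (g1 z - g1 (-z) - k * (2 * z))"
      by (rule MVT2) (use assms 3 in \<open>auto intro!: dphi\<close>)
    then obtain z where z: "z > c" "z < t" "phi t - phi c = (t - c) * (g1 z - g1 (-z) - k * (2 * z))" by blast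
    have "(g1 z - g1 (-z))/z \<ge> (g1 c - g1 (-c))/c" using psi_ratio z assms by auto
    then have "g1 z - g1 (-z) - k * (2 * z) \<ge> 0" using key[of z] z assms
      by simp
    then have "(t - c) * (g1 z - g1 (-z) - k * (2 * z)) \<ge> 0" using z 3 by simp
    then show ?thesis using z by linarith
  qed
  then show ?thesis unfolding phi_def k_def by simp
qed

end


lemma signs_exist:
  fixes w :: "'i \<Rightarrow> 'a::real_inner"
  assumes "finite I"
  shows "\<exists>e. (\<forall>i. e i = 1 \<or> e i = -1) \<and> (\<Sum>i\<in>I. (norm (w i))^2) \<le> (norm (\<Sum>i\<in>I. e i *\<^sub>R w i))^2"
  using assms
proof (induction I rule: finite_induct)
  case empty
  show ?case by (rule exI[of _ "\<lambda>_. 1"]) simp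
next
  case (insert a A)
  then obtain e where e: "\<forall>i. e i = 1 \<or> e i = -1"
    "(\<Sum>i\<in>A. (norm (w i))^2) \<le> (norm (\<Sum>i\<in>A. e i *\<^sub>R w i))^2" by blast
  define S where "S = (\<Sum>i\<in>A. e i *\<^sub>R w i)"
  define s where "s = (if S \<bullet> w a \<ge> 0 then 1 else (-1::real))"
  define e' where "e' = e(a := s)"
  have S': "(\<Sum>i\<in>A. e' i *\<^sub>R w i) = S" unfolding S_def e'_def using insert(2)
    by (intro sum.cong) auto
  have "(\<Sum>i\<in>insert a A. e' i *\<^sub>R w i) = s *\<^sub>R w a + S"
    using insert(1,2) S' by (simp add: e'_def)
  moreover have "(norm (s *\<^sub>R w a + S))^2 = (norm (w a))^2 + 2 * (s * (S \<bullet> w a)) + (norm S)^2"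
  proof -
    have "s * s = 1" unfolding s_def by simp
    then show ?thesis unfolding power2_norm_eq_inner
      by (simp add: inner_add_left inner_add_right inner_commute algebra_simps)
  qed
  moreover have "s * (S \<bullet> w a) \<ge> 0" unfolding s_def by auto
  ultimately have "(norm (\<Sum>i\<in>insert a A. e' i *\<^sub>R w i))^2 \<ge> (norm (w a))^2 + (norm S)^2" by simp
  moreover have "(\<Sum>i\<in>insert a A. (norm (w i))^2) = (norm (w a))^2 + (\<Sum>i\<in>A. (norm (w i))^2)"
    using insert(1,2) by simp
  moreover have "\<forall>i. e' i = 1 \<or> e' i = -1" using e(1) unfolding e'_def s_def by auto
  ultimately show ?case using e(2) unfolding S_def by (intro exI[of _ e']) auto
qed

lemma orthonormal_parseval:
  fixes a :: "'n::finite \<Rightarrow> real^'n"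
  assumes "\<forall>i j. a i \<bullet> a j = (if i = j then 1 else 0)"
  shows "(\<Sum>i\<in>UNIV. (x \<bullet> a i)^2) = (norm x)^2"
proof -
  define A :: "real^'n^'n" where "A = (\<chi> i. a i)"
  have rows: "row i A = a i" for i unfolding A_def row_def by (simp add: vec_eq_iff)
  have "orthogonal_matrix A" unfolding orthogonal_matrix_orthonormal_rows rows
    using assms by (auto simp: norm_eq_sqrt_inner orthogonal_def)
  then have "orthogonal_transformation ((*v) A)"
    by (simp add: orthogonal_transformation_matrix matrix_vector_mul_linear)
  then have "norm (A *v x) = norm x" by (rule orthogonal_transformation_norm)
  then have "(norm x)^2 = (A *v x) \<bullet> (A *v x)" by (metis power2_norm_eq_inner)
  also have "... = (\<Sum>i\<in>UNIV. (x \<bullet> a i)^2)"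
    unfolding inner_vec_def[of "A *v x"] by (simp add: matrix_vector_mul_component A_def inner_commute power2_eq_square)
  finally show ?thesis by simp
qed

lemma dual_or_kernel:
  fixes y :: "'n::finite \<Rightarrow> real^'n"
  shows "(\<exists>x. norm x = 1 \<and> (\<forall>i. x \<bullet> y i = 0)) \<or> (\<exists>w. \<forall>i j. y i \<bullet> w j = (if i = j then 1 else 0))"
proof -
  define Y :: "real^'n^'n" where "Y = (\<chi> i. y i)"
  have Yv: "(Y *v x) $ i = y i \<bullet> x" for x i by (simp add: matrix_vector_mul_component Y_def)
  show ?thesis
  proof (cases "\<forall>x. Y *v x = 0 \<longrightarrow> x = 0")
    case True
    then obtain B where "B ** Y = mat 1" using matrix_left_invertible_ker by blast
    then have YB: "Y ** B = mat 1" using matrix_left_right_inverse by blast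
    have "y i \<bullet> column j B = (if i = j then 1 else 0)" for i j
    proof -
      have "(Y ** B) $ i $ j = y i \<bullet> column j B"
        by (simp add: matrix_matrix_mult_def Y_def column_def inner_vec_def)
      then show ?thesis using YB by (simp add: mat_def)
    qed
    then show ?thesis by (intro disjI2 exI[of _ "\<lambda>j. column j B"]) simp
  next
    case False
    then obtain x where x: "Y *v x = 0" "x \<noteq> 0" by blast
    define u where "u = x /\<^sub>R norm x"
    have "norm u = 1" unfolding u_def using x by simp
    moreover have "u \<bullet> y i = 0" for i
    proof -
      have "y i \<bullet> x = 0" using Yv[of x i] x by simp
      then show ?thesis unfolding u_def by (simp add: inner_commute)
    qed
    ultimately show ?thesis by blast
  qed
qed

lemma hard_lin:
  fixes y :: "'n::finite \<Rightarrow> real^'n"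
  assumes ny: "\<forall>i. norm (y i) = 1"
    and no: "\<not> (\<forall>i j. y i \<bullet> y j = (if i = j then 1 else 0))"
  shows "\<exists>x s. norm x = 1 \<and> 0 \<le> s \<and> s < 1 / sqrt (real CARD('n)) \<and> (\<forall>i. \<bar>x \<bullet> y i\<bar> = s)"
proof -
  have dpos: "real CARD('n) > 0" by simp
  consider (ker) "\<exists>x. norm x = 1 \<and> (\<forall>i. x \<bullet> y i = 0)" | (dual) "\<exists>w. \<forall>i j. y i \<bullet> w j = (if i = j then 1 else 0)"
    using dual_or_kernel by blast
  then show ?thesis
  proof cases
    case ker
    then obtain x where "norm x = 1" "\<forall>i. x \<bullet> y i = 0" by blast
    then show ?thesis using dpos by (intro exI[of _ x] exI[of _ 0]) auto
  next
    case dual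
    then obtain w where w: "\<forall>i j. y i \<bullet> w j = (if i = j then 1 else 0)" by blast
    have w1: "norm (w j) \<ge> 1" for j
    proof -
      have "1 = y j \<bullet> w j" using w by simp
      also have "... \<le> norm (y j) * norm (w j)" by (rule norm_cauchy_schwarz)
      finally show ?thesis using ny by simp
    qed
    have "\<exists>j. norm (w j) > 1"
    proof (rule ccontr)
      assume "\<not> ?thesis"
      then have "norm (w j) = 1" for j using w1[of j] by (meson not_less order_antisym)
      then have "w j = y j" for j
      proof -
        have "(norm (w j - y j))^2 = (norm (w j))^2 - 2 * (y j \<bullet> w j) + (norm (y j))^2"
          unfolding power2_norm_eq_inner by (simp add: inner_diff_left inner_diff_right inner_commute)
        also have "... = 0" using \<open>norm (w j) = 1\<close> ny w by simp
        finally show ?thesis by simp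
      qed
      then show False using no w by metis
    qed
    then obtain j0 where j0: "norm (w j0) > 1" by blast
    have "(\<Sum>j\<in>(UNIV::'n set). (1::real)) < (\<Sum>j\<in>UNIV. (norm (w j))^2)"
    proof (rule sum_strict_mono_ex1[where f="\<lambda>_. 1" and g="\<lambda>j. (norm (w j))^2"])
      show "\<forall>x\<in>UNIV. 1 \<le> (norm (w x))\<^sup>2" using w1 by (simp add: one_le_power)
      show "\<exists>a\<in>UNIV. 1 < (norm (w a))\<^sup>2" using j0 by (metis UNIV_I one_less_power zero_less_numeral)
    qed simp
    then have sumw: "real CARD('n) < (\<Sum>j\<in>UNIV. (norm (w j))^2)" by simp
    obtain e where e: "\<forall>i. e i = 1 \<or> e i = -1" "(\<Sum>i\<in>UNIV. (norm (w i))^2) \<le> (norm (\<Sum>i\<in>UNIV. e i *\<^sub>R w i))^2"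
      using signs_exist[of "UNIV :: 'n set" w] by auto
    define z where "z = (\<Sum>i\<in>UNIV. e i *\<^sub>R w i)"
    have zd: "real CARD('n) < (norm z)^2" using sumw e(2) unfolding z_def by linarith
    have zy: "z \<bullet> y i = e i" for i
    proof -
      have "z \<bullet> y i = (\<Sum>j\<in>UNIV. e j * (y i \<bullet> w j))" unfolding z_def
        by (simp add: inner_commute[of _ "y i"] inner_sum_right)
      also have "... = (\<Sum>j\<in>UNIV. (if j = i then e j else 0))"
        by (rule sum.cong) (use w in auto)
      also have "... = e i" by simp
      finally show ?thesis .
    qed
    have zpos: "norm z > 0" using zd dpos
      by (metis norm_ge_zero not_less_iff_gr_or_eq power_zero_numeral zero_less_norm_iff order_less_trans norm_zero)
    have "sqrt (real CARD('n)) < norm z" using zd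
      by (metis norm_ge_zero real_less_lsqrt)
    then have slt: "1 / norm z < 1 / sqrt (real CARD('n))" using dpos
      by (simp add: frac_less2)
    show ?thesis
    proof (intro exI[of _ "z /\<^sub>R norm z"] exI[of _ "1 / norm z"] conjI allI)
      show "norm (z /\<^sub>R norm z) = 1" using zpos by simp
      show "0 \<le> 1 / norm z" by simp
      show "1 / norm z < 1 / sqrt (real CARD('n))" by (rule slt)
      fix i
      show "\<bar>(z /\<^sub>R norm z) \<bullet> y i\<bar> = 1 / norm z" 
      proof -
        have "(z /\<^sub>R norm z) \<bullet> y i = e i / norm z" using zy[of i] by (simp add: divide_inverse mult.commute)
        moreover have "\<bar>e i\<bar> = 1" using e(1) by (metis abs_1 abs_minus_cancel)
        ultimately show ?thesis using zpos by simp
      qed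
    qed
  qed
qed


context
  fixes g :: "real \<Rightarrow> ereal" and g1 g2 :: "real \<Rightarrow> real"
  assumes finite: "\<forall>t\<in>{-1..<1}. \<bar>g t\<bar> \<noteq> \<infinity>"
    and cont: "continuous_on {-1..<1} (\<lambda>t. real_of_ereal (g t))"
    and lim1: "(g \<longlongrightarrow> g 1) (at_left 1)"
    and deriv1: "\<forall>t\<in>{-1<..<1}. ((\<lambda>s. real_of_ereal (g s)) has_real_derivative g1 t) (at t)"
    and deriv2: "\<forall>t\<in>{-1<..<1}. (g1 has_real_derivative g2 t) (at t)"
    and convex: "convex_on {-1<..<1} g2"
    and pos: "\<forall>t\<in>{-1<..<1}. g2 t > 0"
begin

lemma gfin: "t \<in> {-1..<1} \<Longrightarrow> g t = ereal (real_of_ereal (g t))"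
  using finite by (simp add: ereal_real')

lemma H_eq: "\<bar>t\<bar> < 1 \<Longrightarrow> g t + g (-t) = ereal (real_of_ereal (g t) + real_of_ereal (g (-t)))"
proof -
  assume "\<bar>t\<bar> < 1"
  then have "t \<in> {-1..<1}" "-t \<in> {-1..<1}" by auto
  then have "g t = ereal (real_of_ereal (g t))" "g (-t) = ereal (real_of_ereal (g (-t)))" using gfin by blast+
  then show ?thesis by (metis plus_ereal.simps(1))
qed

lemma Hlow_nonneg:
  assumes c: "0 < c" "c < 1" and s: "0 \<le> s" "s \<le> 1"
  shows "g s + g (-s) \<ge> ereal (real_of_ereal (g c) + real_of_ereal (g (-c))
            + (g1 c - g1 (-c)) / (2*c) * (s^2 - c^2))"
proof -
  define k where "k = (g1 c - g1 (-c)) / (2*c)"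
  define gr where "gr = (\<lambda>t. real_of_ereal (g t))"
  have tang: "gr t + gr (-t) \<ge> gr c + gr (-c) + k * (t^2 - c^2)" if "0 \<le> t" "t < 1" for t
  proof -
    have "gr c + gr (-c) - k * c^2 \<le> gr t + gr (-t) - k * t^2"
      using tangent[OF deriv1 deriv2 convex pos c that] unfolding k_def gr_def by simp
    then show ?thesis by (simp add: right_diff_distrib)
  qed
  show ?thesis
  proof (cases "s < 1")
    case True
    then show ?thesis using H_eq[of s] tang[of s] s unfolding k_def gr_def by simp
  next
    case False
    then have s1: "s = 1" using s by simp
    have ev0: "\<forall>\<^sub>F t in at_left (1::real). t \<in> {0<..<1}" by (rule eventually_at_left_real) simp
    have lim_m: "((\<lambda>t. g (-t)) \<longlongrightarrow> g (-1)) (at_left 1)"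
    proof -
      have "continuous_on {0..1} (\<lambda>t. gr (-t))" unfolding gr_def
        by (rule continuous_on_compose2[OF cont]) (auto intro!: continuous_intros)
      then have "((\<lambda>t. gr (-t)) \<longlongrightarrow> gr (-1)) (at_left 1)"
        using continuous_on_Icc_at_leftD by fastforce
      then have "((\<lambda>t. ereal (gr (-t))) \<longlongrightarrow> ereal (gr (-1))) (at_left 1)"
        by (rule tendsto_ereal)
      moreover have "ereal (gr (-1)) = g (-1)" unfolding gr_def using gfin[of "-1"] by simp
      moreover have "\<forall>\<^sub>F t in at_left 1. ereal (gr (-t)) = g (-t)"
        using ev0 
        by eventually_elim (use gfin in \<open>auto simp: gr_def\<close>)
      ultimately show ?thesis using Lim_transform_eventually[of "\<lambda>t. ereal (gr (-t))" "ereal (gr (-1))" "at_left 1" "\<lambda>t. g (-t)"] by simp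
    qed
    have "\<bar>g (-1)\<bar> \<noteq> \<infinity>" using finite by auto
    then have limH: "((\<lambda>t. g t + g (-t)) \<longlongrightarrow> g 1 + g (-1)) (at_left 1)"
      using tendsto_add_ereal_general[OF _ lim1 lim_m] by auto
    have limB: "((\<lambda>t. ereal (gr c + gr (-c) + k * (t^2 - c^2))) \<longlongrightarrow> ereal (gr c + gr (-c) + k * (1^2 - c^2))) (at_left 1)"
      by (intro tendsto_ereal tendsto_intros)
    have ev: "\<forall>\<^sub>F t in at_left 1. ereal (gr c + gr (-c) + k * (t^2 - c^2)) \<le> g t + g (-t)"
      using ev0
    proof eventually_elim
      case (elim t)
      then show ?case using H_eq[of t] tang[of t] unfolding gr_def by simp
    qed
    have "ereal (gr c + gr (-c) + k * (1^2 - c^2)) \<le> g 1 + g (-1)"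
      by (rule tendsto_le[OF trivial_limit_at_left_real limH limB ev])
    then show ?thesis using s1 unfolding gr_def k_def by simp
  qed
qed

lemma Hlow:
  assumes c: "0 < c" "c < 1" and t: "\<bar>t\<bar> \<le> 1"
  shows "g t + g (-t) \<ge> ereal (real_of_ereal (g c) + real_of_ereal (g (-c))
            + (g1 c - g1 (-c)) / (2*c) * (t^2 - c^2))"
proof -
  have "g t + g (-t) = g \<bar>t\<bar> + g (- \<bar>t\<bar>)" by (cases "t \<ge> 0") (auto simp: add.commute)
  moreover have "t^2 = \<bar>t\<bar>^2" by simp
  ultimately show ?thesis using Hlow_nonneg[OF c, of "\<bar>t\<bar>"] t by simp
qed

end


theorem corollary3p4:
  fixes g :: "real \<Rightarrow> ereal" and g1 g2 :: "real \<Rightarrow> real"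
    and xs :: "(real ^ 'n) list"
  assumes dim: "CARD('n) \<ge> 2"
    and finite: "\<forall>t\<in>{-1..<1}. \<bar>g t\<bar> \<noteq> \<infinity>"
    and cont: "continuous_on {-1..<1} (\<lambda>t. real_of_ereal (g t))"
    and lim1: "(g \<longlongrightarrow> g 1) (at_left 1)"
    and deriv1: "\<forall>t\<in>{-1<..<1}. ((\<lambda>s. real_of_ereal (g s)) has_real_derivative g1 t) (at t)"
    and deriv2: "\<forall>t\<in>{-1<..<1}. (g1 has_real_derivative g2 t) (at t)"
    and convex: "convex_on {-1<..<1} g2"
    and pos: "\<forall>t\<in>{-1<..<1}. g2 t > 0"
    and on_sphere: "\<forall>x\<in>set xs. norm x = 1"
    and len: "length xs = 2 * CARD('n)"
    and antip: "antipodal_config xs"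
  shows "polarization g xs
           = ereal (real CARD('n)) * (g (1 / sqrt (real CARD('n))) + g (- 1 / sqrt (real CARD('n))))
         \<longleftrightarrow> cross_polytope_config xs"
proof -
  note ctx = finite cont lim1 deriv1 deriv2 convex pos
  let ?d = "real CARD('n)"
  define c where "c = 1 / sqrt ?d"
  define gr where "gr = (\<lambda>t. real_of_ereal (g t))"
  define hc where "hc = gr c + gr (-c)"
  have d2: "?d \<ge> 2" using dim by simp
  have c0: "0 < c" unfolding c_def using d2 by simp
  have "1 < sqrt ?d" using d2 by simp
  then have c1: "c < 1" unfolding c_def by simp
  have cc: "?d * c^2 = 1" unfolding c_def using d2 by (simp add: power_divide)
  have mc: "- 1 / sqrt ?d = -c" unfolding c_def by simp
  have Hc: "g c + g (-c) = ereal hc" using H_eq[OF ctx, of c] c0 c1 unfolding hc_def gr_def by simp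
  have rhs: "ereal ?d * (g (1 / sqrt ?d) + g (- 1 / sqrt ?d)) = ereal (?d * hc)"
    unfolding mc c_def[symmetric] Hc by simp
  have M: "image_mset uminus (mset xs) = mset xs" using antip unfolding antipodal_config_def by simp
  have M0: "0 \<notin># mset xs" using on_sphere by auto
  have Ms: "size (mset xs) = 2 * card (UNIV :: 'n set)" using len by simp
  obtain y :: "'n \<Rightarrow> real^'n" where y: "mset xs = (\<Sum>i\<in>UNIV. {#y i, - y i#})"
    using pair_decomp[OF finite_class.finite_UNIV M M0 Ms] by blast
  have yin: "y i \<in> set xs" for i
  proof -
    have "mset xs = {#y i, - y i#} + (\<Sum>j\<in>UNIV - {i}. {#y j, - y j#})"
      unfolding y by (simp add: sum.remove)
    then have "y i \<in># mset xs" by simp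
    then show ?thesis by simp
  qed
  have ny: "\<forall>i. norm (y i) = 1" using on_sphere yin by auto
  have ps: "pot_sum g xs x = (\<Sum>i\<in>UNIV. g (x \<bullet> y i) + g (- (x \<bullet> y i)))" for x
    using pot_sum_pairs[OF y] by simp
  show ?thesis
  proof
    assume eq: "polarization g xs = ereal ?d * (g (1 / sqrt ?d) + g (- 1 / sqrt ?d))"
    show "cross_polytope_config xs"
    proof (cases "\<forall>i j. y i \<bullet> y j = (if i = j then 1 else 0)")
      case True
      then show ?thesis unfolding cross_polytope_config_def using y by blast
    next
      case False
      obtain x s where xs: "norm x = 1" "0 \<le> s" "s < c" "\<forall>i. \<bar>x \<bullet> y i\<bar> = s"
        using hard_lin[of y, OF ny False] unfolding c_def by blast
      have s1: "s < 1" using xs c1 by simp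
      have Hs: "g s + g (-s) = ereal (gr s + gr (-s))" using H_eq[OF ctx, of s] s1 xs(2) unfolding gr_def by simp
      have tmq: "g (x \<bullet> y i) + g (- (x \<bullet> y i)) = ereal (gr s + gr (-s))" for i
      proof -
        have "x \<bullet> y i = s \<or> x \<bullet> y i = -s" by (cases "x \<bullet> y i \<ge> 0") (use xs(4)[rule_format, of i] in auto)
        then show ?thesis
        proof
          assume "x \<bullet> y i = - s"
          then show ?thesis using Hs by (simp add: add.commute)
        qed (use Hs in simp)
      qed
      have "pot_sum g xs x = (\<Sum>i\<in>(UNIV::'n set). ereal (gr s + gr (-s)))" unfolding ps tmq ..
      also have "... = ereal (?d * (gr s + gr (-s)))" by (simp add: sum_ereal)
      also have "... < ereal (?d * hc)"
      proof -
        have "gr s + gr (-s) < hc" using h_strict[OF deriv1 deriv2 convex pos xs(2) xs(3) c1]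
          unfolding hc_def gr_def by simp
        then show ?thesis using d2 by simp
      qed
      finally have lt: "pot_sum g xs x < ereal (?d * hc)" .
      have "polarization g xs \<le> pot_sum g xs x" unfolding polarization_def
        by (rule INF_lower) (simp add: xs(1))
      then show ?thesis using eq rhs lt by simp
    qed
  next
    assume "cross_polytope_config xs"
    then obtain a :: "'n \<Rightarrow> real^'n" where a: "\<forall>i j. a i \<bullet> a j = (if i = j then 1 else 0)"
        "mset xs = (\<Sum>i\<in>UNIV. {#a i, - a i#})"
      unfolding cross_polytope_config_def by blast
    have pa: "pot_sum g xs x = (\<Sum>i\<in>UNIV. g (x \<bullet> a i) + g (- (x \<bullet> a i)))" for x
      using pot_sum_pairs[OF a(2)] by simp
    define k where "k = (g1 c - g1 (-c)) / (2*c)"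
    have na: "norm (a i) = 1" for i using a(1) by (simp add: norm_eq_sqrt_inner)
    have lower: "ereal (?d * hc) \<le> pot_sum g xs x" if "x \<in> sphere 0 1" for x
    proof -
      have "\<bar>x \<bullet> a i\<bar> \<le> 1" for i using Cauchy_Schwarz_ineq2[of x "a i"] that na by simp
      then have "ereal (hc + k * ((x \<bullet> a i)^2 - c^2)) \<le> g (x \<bullet> a i) + g (- (x \<bullet> a i))" for i
        using Hlow[OF ctx c0 c1] unfolding hc_def gr_def k_def by simp
      then have "(\<Sum>i\<in>UNIV. ereal (hc + k * ((x \<bullet> a i)^2 - c^2))) \<le> pot_sum g xs x"
        unfolding pa by (rule sum_mono)
      moreover have "(\<Sum>i\<in>UNIV. ereal (hc + k * ((x \<bullet> a i)^2 - c^2))) = ereal (?d * hc)"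
      proof -
        have "(\<Sum>i\<in>UNIV. hc + k * ((x \<bullet> a i)^2 - c^2)) = ?d * hc + k * ((\<Sum>i\<in>UNIV. (x \<bullet> a i)^2) - ?d * c^2)"
          by (simp add: sum.distrib sum_subtractf sum_distrib_left algebra_simps)
        also have "... = ?d * hc" using orthonormal_parseval[OF a(1), of x] that cc by simp
        finally show ?thesis by (simp add: sum_ereal)
      qed
      ultimately show ?thesis by simp
    qed
    define x0 where "x0 = c *\<^sub>R (\<Sum>j\<in>UNIV. a j)"
    have x0a: "x0 \<bullet> a i = c" for i
    proof -
      have "x0 \<bullet> a i = c * (\<Sum>j\<in>UNIV. a j \<bullet> a i)" unfolding x0_def by (simp add: inner_sum_left)
      also have "(\<Sum>j\<in>UNIV. a j \<bullet> a i) = (\<Sum>j\<in>UNIV. if j = i then 1 else 0)"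
        by (rule sum.cong) (use a(1) in auto)
      also have "... = 1" by simp
      finally show ?thesis by simp
    qed
    have "(norm x0)^2 = 1" using orthonormal_parseval[OF a(1), of x0] x0a cc by simp
    then have x0s: "x0 \<in> sphere 0 1" using norm_ge_zero[of x0] by (auto simp: power2_eq_1_iff)
    have "pot_sum g xs x0 = (\<Sum>i\<in>(UNIV::'n set). ereal hc)" unfolding pa x0a Hc ..
    also have "... = ereal (?d * hc)" by (simp add: sum_ereal)
    finally have p0: "pot_sum g xs x0 = ereal (?d * hc)" .
    have "polarization g xs = ereal (?d * hc)"
    proof (rule antisym)
      show "polarization g xs \<le> ereal (?d * hc)" unfolding polarization_def
        using INF_lower[OF x0s, of "pot_sum g xs"] p0 by simp
      show "ereal (?d * hc) \<le> polarization g xs" unfolding polarization_def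
        by (rule INF_greatest) (rule lower)
    qed
    then show "polarization g xs = ereal ?d * (g (1 / sqrt ?d) + g (- 1 / sqrt ?d))" using rhs by simp
  qed
qed

end
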